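(* Let $\lambda$ be a partition of $n$ with largest part $\lambda_1$, and let $m\ge n-(\lambda_1-1)$. Then there is a bijection between $\mathrm{QYT}_{\le m}(\lambda)$ and the set $\mathrm{SYT}(\lambda)$ of standard Young tableaux of shape $\lambda$; in particular $|\mathrm{QYT}_{\le m}(\lambda)|=|\mathrm{SYT}(\lambda)|$.
   Context: A partition $\lambda=(\lambda_1\ge\lambda_2\ge\cdots\ge\lambda_k>0)$ of $n$ has length $\ell(\lambda)=k$ and size $n=\sum_i\lambda_i$. Its (French) Young diagram has $\lambda_j$ left-justified boxes in row $j$, rows numbered from bottom to top. A semistandard Young tableau (SSYT) of shape $\lambda$ is a filling of the boxes with positive integers that weakly increase from left to right along rows and strictly increase from bottom to top along columns. A standard Young tableau of shape $\lambda$ is an SSYT using each of $1,\dots,n$ exactly once. An SSYT $T$ is quasi-Yamanouchi if for every integer $i>1$ that appears in $T$, the leftmost occurrence of $i$ lies in a column weakly left of (i.e. with column index $\le$ that of) some occurrence of $i-1$ in $T$. $\mathrm{QYT}_{\le m}(\lambda)$ denotes the set of quasi-Yamanouchi tableaux of shape $\lambda$ all of whose entries are at most $m$. *)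

theory Defs
  imports Main
begin

text \<open>Cells are (row, column), 0-indexed,
  row i having lam ! i boxes. A tableau is a function on cells, set to 0 outside
  the diagram so that tableaux of a fixed shape are determined by their entries.\<close>

definition is_partition :: "nat list \<Rightarrow> bool" where
  "is_partition lam \<longleftrightarrow> sorted_wrt (\<ge>) lam \<and> 0 \<notin> set lam"

definition largest_part :: "nat list \<Rightarrow> nat" where
  "largest_part lam = (if lam = [] then 0 else hd lam)"

definition cells :: "nat list \<Rightarrow> (nat \<times> nat) set" where
  "cells lam = {(i, j). i < length lam \<and> j < lam ! i}"

definition is_ssyt :: "nat list \<Rightarrow> (nat \<times> nat \<Rightarrow> nat) \<Rightarrow> bool" where
  "is_ssyt lam T \<longleftrightarrow>
     (\<forall>c\<in>cells lam. 1 \<le> T c) \<and>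
     (\<forall>c. c \<notin> cells lam \<longrightarrow> T c = 0) \<and>
     (\<forall>i j. (i, Suc j) \<in> cells lam \<longrightarrow> T (i, j) \<le> T (i, Suc j)) \<and>
     (\<forall>i j. (Suc i, j) \<in> cells lam \<longrightarrow> T (i, j) < T (Suc i, j))"

definition is_syt :: "nat list \<Rightarrow> (nat \<times> nat \<Rightarrow> nat) \<Rightarrow> bool" where
  "is_syt lam T \<longleftrightarrow> is_ssyt lam T \<and> bij_betw T (cells lam) {1..sum_list lam}"

definition is_quasi_yamanouchi :: "nat list \<Rightarrow> (nat \<times> nat \<Rightarrow> nat) \<Rightarrow> bool" where
  "is_quasi_yamanouchi lam T \<longleftrightarrow>
     (\<forall>i. 1 < i \<and> i \<in> T ` cells lam \<longrightarrow>
        (\<exists>d\<in>cells lam. T d = i - 1 \<and>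
           Min {snd c | c. c \<in> cells lam \<and> T c = i} \<le> snd d))"

definition SYT :: "nat list \<Rightarrow> (nat \<times> nat \<Rightarrow> nat) set" where
  "SYT lam = {T. is_syt lam T}"

definition QYT_le :: "nat \<Rightarrow> nat list \<Rightarrow> (nat \<times> nat \<Rightarrow> nat) set" where
  "QYT_le m lam = {T. is_ssyt lam T \<and> is_quasi_yamanouchi lam T \<and> (\<forall>c\<in>cells lam. T c \<le> m)}"

end

theory Submission imports Defs "HOL-Library.Product_Lexorder" begin

lemma part_mono:
  assumes "is_partition lam" "i \<le> i'" "i' < length lam"
  shows "lam ! i' \<le> lam ! i"
  using assms sorted_wrt_nth_less[of "(\<ge>)" lam i i']
  by (cases "i = i'") (auto simp: is_partition_def)

lemma cells_closed:
  assumes "is_partition lam" "(i', j') \<in> cells lam" "i \<le> i'" "j \<le> j'"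
  shows "(i, j) \<in> cells lam"
  using assms part_mono[OF assms(1) assms(3)] by (auto simp: cells_def)

lemma card_cells: "card (cells lam) = sum_list lam"
proof -
  have "cells lam = Sigma {..<length lam} (\<lambda>i. {..<lam ! i})"
    by (auto simp: cells_def)
  then have "card (cells lam) = (\<Sum>i<length lam. lam ! i)"
    by (simp add: card_SigmaI)
  also have "\<dots> = sum_list lam" by (simp add: sum_list_sum_nth atLeast0LessThan)
  finally show ?thesis .
qed

lemma finite_cells: "finite (cells lam)"
proof -
  have "cells lam \<subseteq> {..<length lam} \<times> {..<Max (insert 0 (set lam))}"
    by (auto simp: cells_def) (metis Max_ge finite_insert finite_set insertCI nth_mem order_less_le_trans)
  then show ?thesis by (rule finite_subset) auto
qed

lemma ssyt_row:
  assumes "is_ssyt lam T" "(i, j + d) \<in> cells lam"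
  shows "T (i, j) \<le> T (i, j + d)"
  using assms(2)
proof (induction d)
  case 0 then show ?case by simp
next
  case (Suc d)
  have "(i, j + d) \<in> cells lam" using Suc.prems by (auto simp: cells_def)
  then have "T (i, j) \<le> T (i, j + d)" using Suc.IH by blast
  also have "\<dots> \<le> T (i, Suc (j + d))" using assms(1) Suc.prems by (auto simp: is_ssyt_def)
  finally show ?case by simp
qed

lemma ssyt_col:
  assumes "is_partition lam" "is_ssyt lam T" "(i + Suc d, j) \<in> cells lam"
  shows "T (i, j) < T (i + Suc d, j)"
  using assms(3)
proof (induction d)
  case 0 then show ?case using assms(2) by (auto simp: is_ssyt_def)
next
  case (Suc d)
  have "(i + Suc d, j) \<in> cells lam" using Suc.prems cells_closed[OF assms(1)] by fastforce
  then have "T (i, j) < T (i + Suc d, j)" using Suc.IH by blast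
  also have "\<dots> < T (Suc (i + Suc d), j)" using assms(2) Suc.prems by (auto simp: is_ssyt_def)
  finally show ?case by simp
qed

lemma ssyt_mono:
  assumes "is_partition lam" "is_ssyt lam T" "(i', j') \<in> cells lam" "i \<le> i'" "j \<le> j'"
  shows "T (i, j) \<le> T (i', j')"
proof -
  have c: "(i, j') \<in> cells lam" using cells_closed[OF assms(1,3) assms(4)] by simp
  have "T (i, j) \<le> T (i, j')" using ssyt_row[OF assms(2), of i j "j' - j"] c assms(5) by simp
  also have "\<dots> \<le> T (i', j')"
  proof (cases "i = i'")
    case False
    then have "i' = i + Suc (i' - i - 1)" using assms(4) by simp
    then show ?thesis using ssyt_col[OF assms(1,2), of i "i' - i - 1" j'] assms(3) by simp
  qed simp
  finally show ?thesis .
qed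

lemma ssyt_mono_strict:
  assumes "is_partition lam" "is_ssyt lam T" "(i', j') \<in> cells lam" "i < i'" "j \<le> j'"
  shows "T (i, j) < T (i', j')"
proof -
  have c: "(i, j') \<in> cells lam" using cells_closed[OF assms(1,3)] assms(4) by simp
  have "T (i, j) \<le> T (i, j')" using ssyt_row[OF assms(2), of i j "j' - j"] c assms(5) by simp
  also have "i' = i + Suc (i' - i - 1)" using assms(4) by simp
  then have "T (i, j') < T (i', j')" using ssyt_col[OF assms(1,2), of i "i' - i - 1" j'] assms(3) by simp
  finally show ?thesis .
qed

lemma rank_props:
  fixes key :: "'a \<Rightarrow> 'b::linorder"
  assumes "finite A" "inj_on key A"
  shows "bij_betw (\<lambda>a. card {b\<in>A. key b \<le> key a}) A {1..card A}"
    and "a \<in> A \<Longrightarrow> b \<in> A \<Longrightarrow> card {x\<in>A. key x \<le> key a} < card {x\<in>A. key x \<le> key b} \<longleftrightarrow> key a < key b"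
proof -
  define r where "r = (\<lambda>a. card {b\<in>A. key b \<le> key a})"
  have lt: "r a < r b \<longleftrightarrow> key a < key b" if "a \<in> A" "b \<in> A" for a b
  proof
    assume "key a < key b"
    then have s1: "{x\<in>A. key x \<le> key a} \<subseteq> {x\<in>A. key x \<le> key b}" by auto
    have "b \<in> {x\<in>A. key x \<le> key b}" "b \<notin> {x\<in>A. key x \<le> key a}" using that \<open>key a < key b\<close> by auto
    then have "{x\<in>A. key x \<le> key a} \<subset> {x\<in>A. key x \<le> key b}" using s1 by blast
    then show "r a < r b" unfolding r_def by (rule psubset_card_mono[rotated]) (use assms in auto)
  next
    assume "r a < r b"
    show "key a < key b"
    proof (rule ccontr)
      assume "\<not> key a < key b"
      then have "{x\<in>A. key x \<le> key b} \<subseteq> {x\<in>A. key x \<le> key a}" by auto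
      then have "r b \<le> r a" unfolding r_def by (rule card_mono[rotated]) (use assms in auto)
      with \<open>r a < r b\<close> show False by simp
    qed
  qed
  then show "a \<in> A \<Longrightarrow> b \<in> A \<Longrightarrow> card {x\<in>A. key x \<le> key a} < card {x\<in>A. key x \<le> key b} \<longleftrightarrow> key a < key b"
    unfolding r_def by blast
  have inj: "inj_on r A"
  proof
    fix a b assume ab: "a \<in> A" "b \<in> A" "r a = r b"
    then have "key a = key b" using lt[of a b] lt[of b a] by (metis less_irrefl neqE)
    then show "a = b" using assms(2) ab by (meson inj_onD)
  qed
  have sub: "r ` A \<subseteq> {1..card A}"
  proof
    fix y assume "y \<in> r ` A"
    then obtain a where a: "a \<in> A" "y = r a" by auto
    have "a \<in> {b\<in>A. key b \<le> key a}" using a by auto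
    then have "1 \<le> r a" unfolding r_def using assms(1)
      by (metis (no_types, lifting) One_nat_def Suc_leI card_gt_0_iff empty_iff finite_subset mem_Collect_eq subsetI)
    moreover have "r a \<le> card A" unfolding r_def by (rule card_mono) (use assms in auto)
    ultimately show "y \<in> {1..card A}" using a by auto
  qed
  have "card (r ` A) = card {1..card A}" using card_image[OF inj] by simp
  then have "r ` A = {1..card A}" using card_subset_eq[OF _ sub] by simp
  then show "bij_betw (\<lambda>a. card {b\<in>A. key b \<le> key a}) A {1..card A}"
    using inj unfolding bij_betw_def r_def by simp
qed

lemma bij_card_le:
  assumes "bij_betw S A {1..(N::nat)}" "a \<in> A"
  shows "card {d\<in>A. S d \<le> S a} = S a"
proof -
  have inj: "inj_on S {d\<in>A. S d \<le> S a}" using assms(1) unfolding bij_betw_def by (auto intro: inj_on_subset)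
  have "S ` {d\<in>A. S d \<le> S a} = {1..S a}"
  proof
    show "S ` {d\<in>A. S d \<le> S a} \<subseteq> {1..S a}" using assms(1) by (auto simp: bij_betw_def)
    show "{1..S a} \<subseteq> S ` {d\<in>A. S d \<le> S a}"
    proof
      fix x assume x: "x \<in> {1..S a}"
      have "S a \<le> N" using assms by (auto simp: bij_betw_def)
      then have "x \<in> S ` A" using x assms(1) by (auto simp: bij_betw_def)
      then show "x \<in> S ` {d\<in>A. S d \<le> S a}" using x by auto
    qed
  qed
  then show ?thesis using card_image[OF inj] by simp
qed


definition key :: "(nat \<times> nat \<Rightarrow> nat) \<Rightarrow> nat \<times> nat \<Rightarrow> nat \<times> nat" where
  "key T c = (T c, snd c)"

definition std :: "nat list \<Rightarrow> (nat \<times> nat \<Rightarrow> nat) \<Rightarrow> nat \<times> nat \<Rightarrow> nat" where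
  "std lam T c = (if c \<in> cells lam then card {d \<in> cells lam. key T d \<le> key T c} else 0)"

lemma key_inj:
  assumes "is_partition lam" "is_ssyt lam T"
  shows "inj_on (key T) (cells lam)"
proof
  fix c d assume cd: "c \<in> cells lam" "d \<in> cells lam" "key T c = key T d"
  obtain i j where c: "c = (i, j)" by (cases c)
  obtain i' j' where d: "d = (i', j')" by (cases d)
  have jj: "j = j'" and tt: "T c = T d" using cd by (auto simp: key_def c d)
  have "i = i'"
  proof (rule ccontr)
    assume "i \<noteq> i'"
    then have "i < i' \<or> i' < i" by auto
    then show False
      using ssyt_mono_strict[OF assms, of i' j' i j] ssyt_mono_strict[OF assms, of i j i' j'] cd tt jj c d by auto
  qed
  then show "c = d" using c d jj by simp
qed

lemma std_props:
  assumes "is_partition lam" "is_ssyt lam T"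
  shows "bij_betw (std lam T) (cells lam) {1..sum_list lam}"
    and "c \<in> cells lam \<Longrightarrow> d \<in> cells lam \<Longrightarrow> std lam T d < std lam T c \<longleftrightarrow> key T d < key T c"
proof -
  note rp = rank_props[OF finite_cells key_inj[OF assms]]
  have "bij_betw (\<lambda>a. card {b\<in>cells lam. key T b \<le> key T a}) (cells lam) {1..sum_list lam}"
    using rp(1) card_cells by simp
  then show "bij_betw (std lam T) (cells lam) {1..sum_list lam}"
    by (rule bij_betw_cong[THEN iffD1, rotated]) (simp add: std_def)
  show "c \<in> cells lam \<Longrightarrow> d \<in> cells lam \<Longrightarrow> std lam T d < std lam T c \<longleftrightarrow> key T d < key T c"
    using rp(2) by (simp add: std_def)
qed

lemma std_syt:
  assumes "is_partition lam" "is_ssyt lam T"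
  shows "is_syt lam (std lam T)"
proof -
  note sp = std_props[OF assms]
  have rows: "std lam T (i, j) \<le> std lam T (i, Suc j)" if "(i, Suc j) \<in> cells lam" for i j
  proof -
    have c: "(i, j) \<in> cells lam" using that by (auto simp: cells_def)
    have "T (i, j) \<le> T (i, Suc j)" using assms(2) that by (auto simp: is_ssyt_def)
    then have "key T (i, j) < key T (i, Suc j)" by (auto simp: key_def)
    then show ?thesis using sp(2)[OF that c] by simp
  qed
  have cols: "std lam T (i, j) < std lam T (Suc i, j)" if "(Suc i, j) \<in> cells lam" for i j
  proof -
    have c: "(i, j) \<in> cells lam" using cells_closed[OF assms(1) that] by simp
    have "T (i, j) < T (Suc i, j)" using assms(2) that by (auto simp: is_ssyt_def)
    then have "key T (i, j) < key T (Suc i, j)" by (auto simp: key_def)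
    then show ?thesis using sp(2)[OF that c] by simp
  qed
  have pos: "1 \<le> std lam T c" if "c \<in> cells lam" for c
    using sp(1) that by (auto simp: bij_betw_def)
  show ?thesis unfolding is_syt_def is_ssyt_def
    using rows cols pos sp(1) by (auto simp: std_def)
qed


definition desc :: "nat list \<Rightarrow> (nat \<times> nat \<Rightarrow> nat) \<Rightarrow> nat \<Rightarrow> bool" where
  "desc lam S k \<longleftrightarrow> (\<exists>c\<in>cells lam. \<exists>c'\<in>cells lam. S c = k \<and> S c' = Suc k \<and> fst c < fst c')"

definition D :: "nat list \<Rightarrow> (nat \<times> nat \<Rightarrow> nat) \<Rightarrow> nat \<Rightarrow> nat" where
  "D lam S k = card {k'. 1 \<le> k' \<and> k' < k \<and> desc lam S k'}"

definition destd :: "nat list \<Rightarrow> (nat \<times> nat \<Rightarrow> nat) \<Rightarrow> nat \<times> nat \<Rightarrow> nat" where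
  "destd lam S c = (if c \<in> cells lam then Suc (D lam S (S c)) else 0)"

lemma D_mono: "k \<le> k' \<Longrightarrow> D lam S k \<le> D lam S k'"
  unfolding D_def by (rule card_mono) auto

lemma D_Suc: "1 \<le> k \<Longrightarrow> D lam S (Suc k) = D lam S k + (if desc lam S k then 1 else 0)"
proof -
  assume k: "1 \<le> k"
  have fin: "finite {k'. 1 \<le> k' \<and> k' < k \<and> desc lam S k'}" by (rule finite_subset[of _ "{..<k}"]) auto
  show ?thesis
  proof (cases "desc lam S k")
    case True
    then have "{k'. 1 \<le> k' \<and> k' < Suc k \<and> desc lam S k'} = insert k {k'. 1 \<le> k' \<and> k' < k \<and> desc lam S k'}"
      using k by auto
    then show ?thesis using True fin by (simp add: D_def)
  next
    case False
    then have "{k'. 1 \<le> k' \<and> k' < Suc k \<and> desc lam S k'} = {k'. 1 \<le> k' \<and> k' < k \<and> desc lam S k'}"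
      using k less_Suc_eq by auto
    then show ?thesis using False by (simp add: D_def)
  qed
qed

lemma D_gap: "1 \<le> k \<Longrightarrow> desc lam S k \<Longrightarrow> a \<le> k \<Longrightarrow> k < b \<Longrightarrow> D lam S a < D lam S b"
proof -
  assume "1 \<le> k" "desc lam S k" "a \<le> k" "k < b"
  then have "D lam S a \<le> D lam S k" "D lam S (Suc k) = Suc (D lam S k)" "D lam S (Suc k) \<le> D lam S b"
    using D_mono[of a k lam S] D_Suc[of k lam S] D_mono[of "Suc k" b lam S] by auto
  then show ?thesis by simp
qed

locale sytl =
  fixes lam S
  assumes part: "is_partition lam" and syt: "is_syt lam S"
begin

lemma ssyt: "is_ssyt lam S" using syt by (simp add: is_syt_def)
lemma bij: "bij_betw S (cells lam) {1..sum_list lam}" using syt by (simp add: is_syt_def)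

lemma inj: "c \<in> cells lam \<Longrightarrow> d \<in> cells lam \<Longrightarrow> S c = S d \<Longrightarrow> c = d"
  using bij by (auto simp: bij_betw_def inj_on_def)

lemma ex: "1 \<le> k \<Longrightarrow> k \<le> sum_list lam \<Longrightarrow> \<exists>c\<in>cells lam. S c = k"
proof -
  assume "1 \<le> k" "k \<le> sum_list lam"
  then have "k \<in> S ` cells lam" using bij by (simp add: bij_betw_def)
  then show ?thesis by auto
qed

lemma range: "c \<in> cells lam \<Longrightarrow> 1 \<le> S c \<and> S c \<le> sum_list lam"
  using bij by (auto simp: bij_betw_def)

lemma desc_iff: "c \<in> cells lam \<Longrightarrow> c' \<in> cells lam \<Longrightarrow> S c = k \<Longrightarrow> S c' = Suc k \<Longrightarrow> desc lam S k \<longleftrightarrow> fst c < fst c'"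
  unfolding desc_def using inj by metis

lemma mono_cells: "c \<in> cells lam \<Longrightarrow> d \<in> cells lam \<Longrightarrow> fst d \<le> fst c \<Longrightarrow> snd d \<le> snd c \<Longrightarrow> S d \<le> S c"
  using ssyt_mono[OF part ssyt, of "fst c" "snd c" "fst d" "snd d"] by simp

lemma step:
  assumes "c \<in> cells lam" "c' \<in> cells lam" "S c' = Suc (S c)" "\<not> desc lam S (S c)"
  shows "fst c' \<le> fst c \<and> snd c < snd c'"
proof -
  have f: "fst c' \<le> fst c" using desc_iff[OF assms(1,2) refl assms(3)] assms(4) by simp
  have "snd c < snd c'"
  proof (rule ccontr)
    assume "\<not> snd c < snd c'"
    then have "S c' \<le> S c" using mono_cells[OF assms(1,2) f] by simp
    then show False using assms(3) by simp
  qed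
  then show ?thesis using f by simp
qed

lemma run:
  assumes "c \<in> cells lam" "c' \<in> cells lam" "S c' = S c + Suc d"
    "\<forall>k. S c \<le> k \<and> k < S c' \<longrightarrow> \<not> desc lam S k"
  shows "fst c' \<le> fst c \<and> snd c < snd c'"
  using assms(2,3,4)
proof (induction d arbitrary: c')
  case 0
  then show ?case using step[OF assms(1) 0(1)] by simp
next
  case (Suc d)
  have "1 \<le> S c + Suc d" "S c + Suc d \<le> sum_list lam" using range[OF Suc.prems(1)] Suc.prems(2) by auto
  then obtain c1 where c1: "c1 \<in> cells lam" "S c1 = S c + Suc d" using ex by blast
  have "\<forall>k. S c \<le> k \<and> k < S c1 \<longrightarrow> \<not> desc lam S k" using Suc.prems c1 by auto
  then have ih: "fst c1 \<le> fst c \<and> snd c < snd c1" using Suc.IH[OF c1] by blast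
  have "fst c' \<le> fst c1 \<and> snd c1 < snd c'"
    using step[OF c1(1) Suc.prems(1)] Suc.prems c1 by auto
  then show ?case using ih by simp
qed

lemma run_D:
  assumes "c \<in> cells lam" "c' \<in> cells lam" "S c < S c'" "D lam S (S c) = D lam S (S c')"
  shows "fst c' \<le> fst c \<and> snd c < snd c'"
proof -
  have "\<forall>k. S c \<le> k \<and> k < S c' \<longrightarrow> \<not> desc lam S k"
  proof (intro allI impI notI)
    fix k assume k: "S c \<le> k \<and> k < S c'" "desc lam S k"
    have "1 \<le> k" using range[OF assms(1)] k by simp
    then show False using D_gap[of k lam S "S c" "S c'"] k assms(4) by simp
  qed
  moreover have "S c' = S c + Suc (S c' - S c - 1)" using assms(3) by simp
  ultimately show ?thesis using run[OF assms(1,2)] by blast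
qed

end


context sytl begin

abbreviation "T \<equiv> destd lam S"

lemma T_cell: "c \<in> cells lam \<Longrightarrow> T c = Suc (D lam S (S c))"
  by (simp add: destd_def)

lemma T_mono: "c \<in> cells lam \<Longrightarrow> d \<in> cells lam \<Longrightarrow> S d \<le> S c \<Longrightarrow> T d \<le> T c"
  using D_mono T_cell by simp

lemma destd_ssyt: "is_ssyt lam T"
proof -
  have rows: "T (i, j) \<le> T (i, Suc j)" if "(i, Suc j) \<in> cells lam" for i j
  proof -
    have c: "(i, j) \<in> cells lam" using that by (auto simp: cells_def)
    have "S (i, j) \<le> S (i, Suc j)" using ssyt that by (auto simp: is_ssyt_def)
    then show ?thesis using T_mono[OF that c] by simp
  qed
  have cols: "T (i, j) < T (Suc i, j)" if "(Suc i, j) \<in> cells lam" for i j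
  proof -
    have c: "(i, j) \<in> cells lam" using cells_closed[OF part that] by simp
    have lt: "S (i, j) < S (Suc i, j)" using ssyt that by (auto simp: is_ssyt_def)
    have le: "T (i, j) \<le> T (Suc i, j)" using T_mono[OF that c] lt by simp
    have "T (i, j) \<noteq> T (Suc i, j)"
    proof
      assume "T (i, j) = T (Suc i, j)"
      then have "D lam S (S (i, j)) = D lam S (S (Suc i, j))" using T_cell c that by simp
      then show False using run_D[OF c that lt] by simp
    qed
    then show ?thesis using le by simp
  qed
  show ?thesis unfolding is_ssyt_def using rows cols by (auto simp: destd_def)
qed

lemma key_lt: "c \<in> cells lam \<Longrightarrow> d \<in> cells lam \<Longrightarrow> S d < S c \<Longrightarrow> key T d < key T c"
proof -
  assume cd: "c \<in> cells lam" "d \<in> cells lam" "S d < S c"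
  have le: "T d \<le> T c" using T_mono cd by simp
  show ?thesis
  proof (cases "T d = T c")
    case True
    then have "D lam S (S d) = D lam S (S c)" using T_cell cd by simp
    then have "snd d < snd c" using run_D[OF cd(2,1,3)] by simp
    then show ?thesis using True by (simp add: key_def)
  next
    case False
    then show ?thesis using le by (simp add: key_def)
  qed
qed

lemma std_destd: "std lam T = S"
proof
  fix c
  show "std lam T c = S c"
  proof (cases "c \<in> cells lam")
    case True
    have "{d \<in> cells lam. key T d \<le> key T c} = {d \<in> cells lam. S d \<le> S c}"
    proof (intro Collect_cong conj_cong refl iffI)
      fix d assume d: "d \<in> cells lam"
      { assume "key T d \<le> key T c"
        then show "S d \<le> S c" using key_lt[OF d True] by (meson leD leI) }
      { assume "S d \<le> S c"
        then show "key T d \<le> key T c" using key_lt[OF True d] d True inj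
          by (metis le_less) }
    qed
    then show ?thesis using True bij_card_le[OF bij True] by (simp add: std_def)
  next
    case False
    have "S c = 0" using ssyt False unfolding is_ssyt_def by blast
    then show ?thesis using False by (simp add: std_def)
  qed
qed

end


context sytl begin

lemma D_1: "D lam S (Suc 0) = 0" by (simp add: D_def)

lemma destd_qy: "is_quasi_yamanouchi lam T"
  unfolding is_quasi_yamanouchi_def
proof (intro allI impI)
  fix v assume v: "1 < v \<and> v \<in> T ` cells lam"
  define A where "A = {c \<in> cells lam. T c = v}"
  have finA: "finite A" using finite_cells by (simp add: A_def)
  have neA: "A \<noteq> {}" using v by (auto simp: A_def)
  define k0 where "k0 = Min (S ` A)"
  have "k0 \<in> S ` A" unfolding k0_def using finA neA by simp
  then obtain c0 where c0: "c0 \<in> cells lam" "T c0 = v" "S c0 = k0" by (auto simp: A_def)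
  have min: "k0 \<le> S c" if "c \<in> cells lam" "T c = v" for c
    unfolding k0_def using finA that by (auto simp: A_def)
  have r0: "1 \<le> k0" "k0 \<le> sum_list lam" using range[OF c0(1)] c0 by auto
  have "k0 \<noteq> 1" using c0 v T_cell[OF c0(1)] D_1 by auto
  then have "\<exists>c\<in>cells lam. S c = k0 - 1" using ex[of "k0 - 1"] r0 by simp
  then obtain d where d: "d \<in> cells lam" "S d = k0 - 1" by blast
  have Sd: "S c0 = Suc (S d)" using d c0 r0 \<open>k0 \<noteq> 1\<close> by simp
  have Tdle: "T d \<le> T c0" using T_mono[OF c0(1) d(1)] Sd by simp
  have Tdne: "T d \<noteq> v" using min[OF d(1)] d r0 \<open>k0 \<noteq> 1\<close> by auto
  have "D lam S (S c0) = D lam S (S d) + (if desc lam S (S d) then 1 else 0)"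
    using D_Suc[of "S d" lam S] Sd range[OF d(1)] by simp
  then have ds: "desc lam S (S d)" and Td: "T d = v - 1"
    using T_cell[OF c0(1)] T_cell[OF d(1)] c0(2) Tdne by (auto split: if_splits)
  have fd: "fst d < fst c0" using desc_iff[OF d(1) c0(1) refl Sd] ds by simp
  have sn: "snd c0 \<le> snd d"
  proof (rule ccontr)
    assume "\<not> snd c0 \<le> snd d"
    then have lt: "snd d < snd c0" by simp
    define e where "e = (fst c0, snd d)"
    have e: "e \<in> cells lam" using cells_closed[OF part, of "fst c0" "snd c0" "fst c0" "snd d"] c0(1) lt
      by (simp add: e_def)
    have "S e \<le> S c0" using mono_cells[OF c0(1) e] lt by (simp add: e_def)
    moreover have "e \<noteq> c0" using lt by (cases c0) (auto simp: e_def)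
    ultimately have "S e < S c0" using inj[OF e c0(1)] by fastforce
    moreover have "S d < S e"
      using ssyt_mono_strict[OF part ssyt, of "fst c0" "snd d" "fst d" "snd d"] e fd
      by (simp add: e_def)
    ultimately show False using Sd by simp
  qed
  have "Min {snd c |c. c \<in> cells lam \<and> T c = v} \<le> snd c0"
  proof (rule Min_le)
    have "{snd c |c. c \<in> cells lam \<and> T c = v} = snd ` A" unfolding A_def by blast
    then show "finite {snd c |c. c \<in> cells lam \<and> T c = v}" using finA by simp
    show "snd c0 \<in> {snd c |c. c \<in> cells lam \<and> T c = v}" using c0 by blast
  qed
  then show "\<exists>d\<in>cells lam. T d = v - 1 \<and> Min {snd c |c. c \<in> cells lam \<and> T c = v} \<le> snd d"
    using d(1) Td sn by auto
qed

lemma destd_bound: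
  assumes "c \<in> cells lam"
  shows "T c + largest_part lam \<le> sum_list lam + 1"
proof -
  have ne: "lam \<noteq> []" using assms by (auto simp: cells_def)
  define N where "N = sum_list lam"
  define l where "l = lam ! 0"
  have lp: "largest_part lam = l" using ne by (simp add: largest_part_def l_def hd_conv_nth)
  have l0: "(0, j) \<in> cells lam" if "j < l" for j using that ne by (auto simp: cells_def l_def)
  define Des where "Des = {k. 1 \<le> k \<and> k < N \<and> desc lam S k}"
  define Nd where "Nd = (\<lambda>j. S (0, j) - 1) ` {1..<l}"
  have sub: "Des \<union> Nd \<subseteq> {1..<N}"
  proof -
    have "Nd \<subseteq> {1..<N}"
    proof
      fix x assume "x \<in> Nd"
      then obtain j where j: "1 \<le> j" "j < l" "x = S (0, j) - 1" by (auto simp: Nd_def)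
      have "S (0, 0) \<le> S (0, j)" using mono_cells[OF l0[OF j(2)] l0[of 0]] j by simp
      moreover have "S (0, 0) \<noteq> S (0, j)" using inj[OF l0[of 0] l0[OF j(2)]] j by auto
      ultimately have "2 \<le> S (0, j)" using range[OF l0[of 0]] j by simp
      moreover have "S (0, j) \<le> N" using range[OF l0[OF j(2)]] by (simp add: N_def)
      ultimately show "x \<in> {1..<N}" using j(3) by auto
    qed
    then show ?thesis by (auto simp: Des_def)
  qed
  have disj: "Des \<inter> Nd = {}"
  proof (rule ccontr)
    assume "Des \<inter> Nd \<noteq> {}"
    then obtain j where j: "1 \<le> j" "j < l" "desc lam S (S (0, j) - 1)" "1 \<le> S (0, j) - 1"
      by (auto simp: Des_def Nd_def)
    then obtain a b where ab: "a \<in> cells lam" "b \<in> cells lam" "S a = S (0, j) - 1" "S b = Suc (S (0, j) - 1)" "fst a < fst b"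
      unfolding desc_def by blast
    have "S b = S (0, j)" using ab(4) j(4) by simp
    then have "b = (0, j)" using inj[OF ab(2) l0[OF j(2)]] by simp
    then show False using ab(5) by simp
  qed
  have cardNd: "card Nd = l - 1"
  proof -
    have "inj_on (\<lambda>j. S (0, j) - 1) {1..<l}"
    proof
      fix x y assume xy: "x \<in> {1..<l}" "y \<in> {1..<l}" "S (0, x) - 1 = S (0, y) - 1"
      have "S (0, x) \<ge> 1" "S (0, y) \<ge> 1" using range l0 xy by auto
      then have "S (0, x) = S (0, y)" using xy(3) by simp
      then show "x = y" using inj[OF l0 l0] xy by auto
    qed
    then show ?thesis by (simp add: Nd_def card_image)
  qed
  have "card Des + card Nd = card (Des \<union> Nd)"
    using disj card_Un_disjoint[of Des Nd] sub finite_subset[OF sub] by auto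
  also have "\<dots> \<le> card {1..<N}" using sub by (rule card_mono[rotated]) simp
  finally have cD: "card Des + (l - 1) \<le> N - 1" using cardNd by simp
  have "T c = Suc (D lam S (S c))" using T_cell[OF assms] .
  also have "D lam S (S c) \<le> D lam S N" using D_mono range[OF assms] by (simp add: N_def)
  also have "D lam S N = card Des" by (simp add: D_def Des_def)
  finally have "T c \<le> Suc (card Des)" by simp
  moreover have "1 \<le> l" using l0 ne assms part
    by (metis One_nat_def Suc_leI gr0I in_set_conv_nth is_partition_def length_greater_0_conv l_def)
  moreover have "1 \<le> N" using range[OF l0[of 0]] \<open>1 \<le> l\<close> by (simp add: N_def)
  moreover have "l \<le> N" using \<open>1 \<le> N\<close> \<open>1 \<le> l\<close> cD by linarith
  ultimately show ?thesis using cD lp by (simp add: N_def)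
qed

end


locale qyl =
  fixes lam T
  assumes part: "is_partition lam" and ssyt: "is_ssyt lam T" and qy: "is_quasi_yamanouchi lam T"
begin

abbreviation "S \<equiv> std lam T"

lemma syt: "is_syt lam S" using std_syt[OF part ssyt] .

sublocale s: sytl lam S using part syt by unfold_locales

lemma lt_iff: "c \<in> cells lam \<Longrightarrow> d \<in> cells lam \<Longrightarrow> S d < S c \<longleftrightarrow> key T d < key T c"
  using std_props(2)[OF part ssyt] .

lemma le_iff: "c \<in> cells lam \<Longrightarrow> d \<in> cells lam \<Longrightarrow> S d \<le> S c \<longleftrightarrow> key T d \<le> key T c"
  using lt_iff[of d c] by (meson leD leI)

lemma Tpos: "c \<in> cells lam \<Longrightarrow> 1 \<le> T c" using ssyt by (simp add: is_ssyt_def)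

lemma consec:
  assumes c: "c \<in> cells lam" and c': "c' \<in> cells lam" and Sc: "S c' = Suc (S c)"
  shows "(fst c < fst c' \<longrightarrow> T c' = Suc (T c)) \<and> (\<not> fst c < fst c' \<longrightarrow> T c' = T c)"
proof -
  have between: "False" if "d \<in> cells lam" "key T c < key T d" "key T d < key T c'" for d
    using lt_iff[OF that(1) c] lt_iff[OF c' that(1)] that Sc by simp
  have kc: "key T c < key T c'" using lt_iff[OF c' c] Sc by simp
  then have Tle: "T c \<le> T c'" by (auto simp: key_def)
  show ?thesis
  proof (cases "T c = T c'")
    case True
    then have sn: "snd c < snd c'" using kc by (simp add: key_def)
    have "\<not> fst c < fst c'"
    proof
      assume f: "fst c < fst c'"
      define e where "e = (fst c', snd c)"
      have e: "e \<in> cells lam" using cells_closed[OF part, of "fst c'" "snd c'" "fst c'" "snd c"] c' sn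
        by (simp add: e_def)
      have "T c < T e" using ssyt_mono_strict[OF part ssyt, of "fst c'" "snd c" "fst c" "snd c"] e f
        by (simp add: e_def)
      moreover have "T e \<le> T c'" using ssyt_mono[OF part ssyt, of "fst c'" "snd c'" "fst c'" "snd c"] c' sn
        by (simp add: e_def)
      ultimately show False using True by simp
    qed
    then show ?thesis using True by simp
  next
    case False
    define v where "v = T c'"
    have v1: "1 < v" using Tpos[OF c] Tle False by (simp add: v_def)
    have "v \<in> T ` cells lam" using c' by (simp add: v_def)
    then obtain d where d: "d \<in> cells lam" "T d = v - 1"
      and mn: "Min {snd x |x. x \<in> cells lam \<and> T x = v} \<le> snd d"
      using qy v1 unfolding is_quasi_yamanouchi_def by blast
    have Tc: "T c = v - 1"
    proof (rule ccontr)
      assume "T c \<noteq> v - 1"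
      then have "T c < v - 1" using Tle False by (simp add: v_def)
      then have "key T c < key T d" "key T d < key T c'" using d v1 by (auto simp: key_def v_def)
      then show False using between[OF d(1)] by blast
    qed
    have "key T d < key T c'" using d v1 by (auto simp: key_def v_def)
    then have "S d < S c'" using lt_iff[OF c' d(1)] by simp
    then have "S d \<le> S c" using Sc by simp
    then have "key T d \<le> key T c" using le_iff[OF c d(1)] by simp
    then have sdc: "snd d \<le> snd c" using d Tc by (simp add: key_def)
    define A where "A = {x \<in> cells lam. T x = v}"
    have Meq: "{snd x |x. x \<in> cells lam \<and> T x = v} = snd ` A" unfolding A_def by blast
    have finA: "finite A" using finite_cells by (simp add: A_def)
    have "c' \<in> A" using c' by (simp add: A_def v_def)
    then have "Min (snd ` A) \<in> snd ` A" using finA Min_in by blast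
    then obtain c'' where c''A: "c'' \<in> A" and c''m: "snd c'' = Min (snd ` A)" by (metis imageE)
    have c'': "c'' \<in> cells lam" "T c'' = v" using c''A by (auto simp: A_def)
    have "key T c < key T c''" using c'' Tc v1 by (simp add: key_def)
    then have "S c < S c''" using lt_iff[OF c''(1) c] by simp
    then have "S c' \<le> S c''" using Sc by simp
    then have "key T c' \<le> key T c''" using le_iff[OF c''(1) c'] by simp
    then have "snd c' \<le> snd c''" using c'' v_def by (simp add: key_def)
    then have sc: "snd c' \<le> snd c" using c''m mn sdc Meq by simp
    have f: "fst c < fst c'"
    proof (rule ccontr)
      assume "\<not> fst c < fst c'"
      then have "T c' \<le> T c" using ssyt_mono[OF part ssyt, of "fst c" "snd c" "fst c'" "snd c'"] c sc by simp
      then show False using Tle False by simp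
    qed
    then show ?thesis using Tc v1 by (simp add: v_def)
  qed
qed

lemma T_eq_aux: "\<forall>c\<in>cells lam. S c = k \<longrightarrow> T c = Suc (D lam S k)"
proof (induction k)
  case 0
  then show ?case using s.range by fastforce
next
  case (Suc k)
  show ?case
  proof (intro ballI impI)
    fix c' assume c': "c' \<in> cells lam" "S c' = Suc k"
    show "T c' = Suc (D lam S (Suc k))"
    proof (cases "k = 0")
      case True
      have "T c' = 1"
      proof (rule ccontr)
        assume "T c' \<noteq> 1"
        then have v1: "1 < T c'" using Tpos[OF c'(1)] by simp
        then obtain d where d: "d \<in> cells lam" "T d = T c' - 1"
          using qy c'(1) unfolding is_quasi_yamanouchi_def by blast
        have "key T d < key T c'" using d v1 by (auto simp: key_def)
        then have "S d < S c'" using lt_iff[OF c'(1) d(1)] by simp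
        then show False using s.range[OF d(1)] c' True by simp
      qed
      then show ?thesis using True by (simp add: D_def)
    next
      case False
      have "1 \<le> k" "k \<le> sum_list lam" using False s.range[OF c'(1)] c'(2) by auto
      then obtain c where c: "c \<in> cells lam" "S c = k" using s.ex by blast
      have ih: "T c = Suc (D lam S k)" using Suc.IH c by blast
      have "D lam S (Suc k) = D lam S k + (if desc lam S k then 1 else 0)"
        using D_Suc \<open>1 \<le> k\<close> by blast
      moreover have "desc lam S k \<longleftrightarrow> fst c < fst c'" using s.desc_iff[OF c(1) c'(1) c(2) c'(2)] .
      moreover have "S c' = Suc (S c)" using c c' by simp
      ultimately show ?thesis using consec[OF c(1) c'(1)] ih by auto
    qed
  qed
qed

lemma destd_std: "destd lam S = T"
proof
  fix c
  show "destd lam S c = T c"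
  proof (cases "c \<in> cells lam")
    case True
    then show ?thesis using T_eq_aux by (simp add: destd_def)
  next
    case False
    then have "T c = 0" using ssyt unfolding is_ssyt_def by blast
    then show ?thesis using False by (simp add: destd_def)
  qed
qed

end


theorem proposition3p2:
  fixes lam :: "nat list" and n m :: nat
  assumes "is_partition lam"
    and "sum_list lam = n"
    and "int m \<ge> int n - (int (largest_part lam) - 1)"
  shows "(\<exists>f. bij_betw f (QYT_le m lam) (SYT lam)) \<and> card (QYT_le m lam) = card (SYT lam)"
proof -
  have b: "bij_betw (std lam) (QYT_le m lam) (SYT lam)"
  proof (rule bij_betw_byWitness[where f' = "destd lam"])
    show "\<forall>T\<in>QYT_le m lam. destd lam (std lam T) = T"
    proof
      fix T assume "T \<in> QYT_le m lam"
      then interpret qyl lam T using assms(1) by unfold_locales (auto simp: QYT_le_def)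
      show "destd lam (std lam T) = T" by (rule destd_std)
    qed
    show "\<forall>S\<in>SYT lam. std lam (destd lam S) = S"
    proof
      fix S assume "S \<in> SYT lam"
      then interpret sytl lam S using assms(1) by unfold_locales (auto simp: SYT_def)
      show "std lam (destd lam S) = S" by (rule std_destd)
    qed
    show "std lam ` QYT_le m lam \<subseteq> SYT lam"
      using std_syt[OF assms(1)] by (auto simp: QYT_le_def SYT_def)
    show "destd lam ` SYT lam \<subseteq> QYT_le m lam"
    proof
      fix T assume "T \<in> destd lam ` SYT lam"
      then obtain S where S: "S \<in> SYT lam" "T = destd lam S" by auto
      then interpret sytl lam S using assms(1) by unfold_locales (auto simp: SYT_def)
      have "\<forall>c\<in>cells lam. destd lam S c \<le> m"
      proof
        fix c assume "c \<in> cells lam"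
        then have "destd lam S c + largest_part lam \<le> n + 1" using destd_bound assms(2) by simp
        then show "destd lam S c \<le> m" using assms(3) by linarith
      qed
      then show "T \<in> QYT_le m lam" using destd_ssyt destd_qy S by (simp add: QYT_le_def)
    qed
  qed
  then show ?thesis using bij_betw_same_card by blast
qed

end
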